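(* Let $G=\mathbb{R}\times\mathbb{C}$ be the model of $\widetilde{\mathrm{SL}}_2(\mathbb{R})$ described below, let $\eta>0$ and $C^+_\eta=\{(\xi,\zeta)\in\mathbb{R}\times\mathbb{C}:\xi^2\ge(\eta+1)|\zeta|^2,\ \xi\ge 0\}$, and let $\tau=dc$ be the differential of the first coordinate. Then for every $(c,w)\in G$ and every nonzero $v\in(L_{(c,w)})_*C^+_\eta$ we have $\tau_{(c,w)}(v)>0$, and there are constants $A,B>0$ (depending only on $\eta$) such that $\dfrac{|v|}{\tau_{(c,w)}(v)}\le A+B|w|$ for all such $(c,w)$ and $v$, where $|v|$ is the Euclidean norm on $\mathbb{R}\times\mathbb{C}\cong\mathbb{R}^3$.
   Context: $G=\mathbb{R}\times\mathbb{C}$ with identity $(0,0)$ and multiplication $(c_1,w_1)\cdot(c_2,w_2)=(c,w)$, $c=c_1+c_2+\arctan\frac{\operatorname{Im}(w_1\bar w_2e^{-i(c_1+c_2)})}{\sqrt{1+|w_1|^2}\sqrt{1+|w_2|^2}+\operatorname{Re}(w_1\bar w_2e^{-i(c_1+c_2)})}$, $w=w_2\sqrt{1+|w_1|^2}e^{ic_1}+w_1\sqrt{1+|w_2|^2}e^{-ic_2}$; this is the universal cover of $\mathrm{SU}_{1,1}\cong\mathrm{SL}_2(\mathbb{R})$. $L_{(c,w)}$ is left multiplication and $(L_{(c,w)})_*$ its differential at the identity, where tangent spaces are identified with $\mathbb{R}\times\mathbb{C}$ via the coordinates. *)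

theory Defs
  imports "HOL-Analysis.Analysis"
begin

text \<open>The model of the universal cover of SU(1,1) on real x complex.\<close>

definition gmul :: "real \<times> complex \<Rightarrow> real \<times> complex \<Rightarrow> real \<times> complex" where
  "gmul g h = (case g of (c1, w1) \<Rightarrow> case h of (c2, w2) \<Rightarrow>
     (let z = w1 * cnj w2 * cis (- (c1 + c2)) in
       (c1 + c2 + arctan (Im z / (sqrt (1 + (cmod w1)\<^sup>2) * sqrt (1 + (cmod w2)\<^sup>2) + Re z)),
        w2 * complex_of_real (sqrt (1 + (cmod w1)\<^sup>2)) * cis c1
        + w1 * complex_of_real (sqrt (1 + (cmod w2)\<^sup>2)) * cis (- c2))))"

definition Lstar :: "real \<times> complex \<Rightarrow> real \<times> complex \<Rightarrow> real \<times> complex" where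
  "Lstar g = frechet_derivative (gmul g) (at (0, 0))"

definition Cplus :: "real \<Rightarrow> (real \<times> complex) set" where
  "Cplus \<eta> = {(\<xi>, \<zeta>). \<xi>\<^sup>2 \<ge> (\<eta> + 1) * (cmod \<zeta>)\<^sup>2 \<and> \<xi> \<ge> 0}"

definition tau :: "real \<times> complex \<Rightarrow> real \<times> complex \<Rightarrow> real" where
  "tau g v = fst v"

end

theory Submission
  imports Defs
begin

lemmas has_derivative_cnj' [derivative_intros] = bounded_linear.has_derivative[OF bounded_linear_cnj]
lemmas has_derivative_Im' [derivative_intros] = bounded_linear.has_derivative[OF bounded_linear_Im]

lemma dz: "((\<lambda>h::real\<times>complex. w * cnj (snd h) * cis (-(c+fst h))) has_derivative (\<lambda>v. w * cnj (snd v) * cis (-c))) (at (0,0))"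
  apply (rule has_derivative_eq_rhs)
   apply (rule derivative_eq_intros | simp)+
  done

lemma dq: "((\<lambda>h::real\<times>complex. sqrt(1+((Re (snd h))^2+(Im (snd h))^2))) has_derivative (\<lambda>v. 0)) (at (0,0))"
  apply (rule has_derivative_eq_rhs)
   apply (rule derivative_eq_intros | simp)+
  done


lemma dfirst:
  fixes s :: real assumes s: "s > 0"
  shows "((\<lambda>h::real\<times>complex. c + fst h + arctan (Im (w * cnj (snd h) * cis (-(c+fst h))) / (s * sqrt(1+((Re (snd h))^2+(Im (snd h))^2)) + Re (w * cnj (snd h) * cis (-(c+fst h))))))
     has_derivative (\<lambda>v. fst v + Im (w * cnj (snd v) * cis (-c)) / s)) (at (0,0))"
proof -
  have d1: "((\<lambda>h::real\<times>complex. Im (w * cnj (snd h) * cis (-(c+fst h)))) has_derivative (\<lambda>v. Im (w * cnj (snd v) * cis (-c)))) (at (0,0))"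
    by (rule has_derivative_Im'[OF dz])
  have d2: "((\<lambda>h::real\<times>complex. s * sqrt(1+((Re (snd h))^2+(Im (snd h))^2)) + Re (w * cnj (snd h) * cis (-(c+fst h)))) has_derivative (\<lambda>v. s * 0 + Re (w * cnj (snd v) * cis (-c)))) (at (0,0))"
    by (intro has_derivative_add has_derivative_mult_right dq has_derivative_Re[OF dz])
  have d3: "((\<lambda>h::real\<times>complex. Im (w * cnj (snd h) * cis (-(c+fst h))) / (s * sqrt(1+((Re (snd h))^2+(Im (snd h))^2)) + Re (w * cnj (snd h) * cis (-(c+fst h))))) has_derivative (\<lambda>v. Im (w * cnj (snd v) * cis (-c)) / s)) (at (0,0))"
    apply (rule has_derivative_eq_rhs)
     apply (rule has_derivative_divide[OF d1 d2])
    using s by (simp_all add: fun_eq_iff)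
  show ?thesis
    apply (rule has_derivative_eq_rhs)
     apply (rule has_derivative_add[OF has_derivative_add[OF has_derivative_const has_derivative_fst[OF has_derivative_ident]]])
     apply (rule has_derivative_arctan[OF d3])
    by (simp add: fun_eq_iff)
qed

lemma dsecond:
  fixes s :: real
  shows "((\<lambda>h::real\<times>complex. snd h * of_real s * cis c + w * of_real(sqrt(1+((Re (snd h))^2+(Im (snd h))^2))) * cis (- fst h))
     has_derivative (\<lambda>v. snd v * of_real s * cis c - \<i> * w * of_real (fst v))) (at (0,0))"
  apply (rule has_derivative_eq_rhs)
   apply (rule derivative_eq_intros has_derivative_of_real[OF dq] | simp)+
  apply (simp add: fun_eq_iff scaleR_conv_of_real)
  done

definition LL :: "real \<Rightarrow> complex \<Rightarrow> real \<times> complex \<Rightarrow> real \<times> complex" where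
 "LL c w v = (fst v + Im (w * cnj (snd v) * cis (- c)) / sqrt (1 + (cmod w)\<^sup>2),
     snd v * complex_of_real (sqrt (1 + (cmod w)\<^sup>2)) * cis c - \<i> * w * complex_of_real (fst v))"

lemma gmul_eq: "gmul (c,w) = (\<lambda>h. (c + fst h + arctan (Im (w * cnj (snd h) * cis (-(c+fst h))) / (sqrt(1+(cmod w)^2) * sqrt(1 + ((Re (snd h))^2 + (Im (snd h))^2)) + Re (w * cnj (snd h) * cis (-(c+fst h))))),
   snd h * of_real (sqrt(1+(cmod w)^2)) * cis c + w * of_real(sqrt(1+((Re (snd h))^2+(Im (snd h))^2))) * cis (- fst h)))"
  by (auto simp: gmul_def fun_eq_iff cmod_power2 Let_def split: prod.splits)

lemma Lstar_eq: "Lstar (c,w) = LL c w"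
proof -
  have s: "sqrt (1 + (cmod w)\<^sup>2) > 0" by (simp add: add_pos_nonneg)
  have "(gmul (c,w) has_derivative LL c w) (at (0,0))"
    unfolding gmul_eq LL_def
    by (rule has_derivative_Pair[OF dfirst[OF s] dsecond])
  then show ?thesis unfolding Lstar_def by (rule frechet_derivative_at[symmetric])
qed

lemma key:
  fixes \<eta> \<xi> :: real and \<zeta> w :: complex
  assumes eta: "\<eta> > 0" and C: "(\<xi>, \<zeta>) \<in> Cplus \<eta>" and nz: "LL c w (\<xi>, \<zeta>) \<noteq> 0"
  shows "fst (LL c w (\<xi>, \<zeta>)) \<ge> \<xi> * (sqrt (1 + \<eta>) - 1) / sqrt (1 + \<eta>)"
    and "\<xi> > 0"
    and "norm (LL c w (\<xi>, \<zeta>)) \<le> \<xi> * (3 + 2 * cmod w)"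
proof -
  define a where "a = sqrt (1 + \<eta>)"
  define s where "s = sqrt (1 + (cmod w)\<^sup>2)"
  have a1: "a > 1" using eta by (simp add: a_def)
  have s0: "s > 0" by (simp add: s_def add_pos_nonneg)
  have ws: "cmod w \<le> s" unfolding s_def by (rule real_le_rsqrt) simp
  have s1: "s \<le> 1 + cmod w" unfolding s_def
    by (rule real_sqrt_le_iff[THEN iffD2, of _ "(1 + cmod w)^2", simplified]) (simp add: power2_eq_square algebra_simps)
  have x0: "\<xi> \<ge> 0" and q: "\<xi>\<^sup>2 \<ge> (\<eta> + 1) * (cmod \<zeta>)\<^sup>2" using C by (auto simp: Cplus_def)
  have za: "cmod \<zeta> * a \<le> \<xi>"
  proof -
    have "cmod \<zeta> * a = sqrt ((\<eta> + 1) * (cmod \<zeta>)\<^sup>2)" unfolding a_def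
      by (simp add: real_sqrt_mult mult.commute add.commute)
    also have "\<dots> \<le> sqrt (\<xi>\<^sup>2)" using q by (rule real_sqrt_le_mono)
    also have "\<dots> = \<xi>" using x0 by simp
    finally show ?thesis .
  qed
  have zx: "cmod \<zeta> \<le> \<xi>" using za a1 norm_ge_zero[of \<zeta>]
    by (smt (verit) mult_le_cancel_left1)
  have za': "cmod \<zeta> \<le> \<xi> / a" using za a1 by (simp add: field_simps)
  show xp: "\<xi> > 0"
  proof (rule ccontr)
    assume "\<not> \<xi> > 0"
    then have "\<xi> = 0" using x0 by simp
    then have "\<zeta> = 0" using zx by simp
    then show False using nz \<open>\<xi> = 0\<close> by (simp add: LL_def zero_prod_def)
  qed
  have imb: "\<bar>Im (w * cnj \<zeta> * cis (- c))\<bar> \<le> cmod w * cmod \<zeta>"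
    using abs_Im_le_cmod[of "w * cnj \<zeta> * cis (- c)"] by (simp add: norm_mult)
  have t: "\<bar>Im (w * cnj \<zeta> * cis (- c)) / s\<bar> \<le> cmod \<zeta>"
  proof -
    have "\<bar>Im (w * cnj \<zeta> * cis (- c)) / s\<bar> \<le> cmod w * cmod \<zeta> / s"
      using imb s0 by (simp add: abs_div divide_right_mono)
    also have "\<dots> \<le> s * cmod \<zeta> / s"
      using ws s0 by (intro divide_right_mono mult_right_mono) auto
    also have "\<dots> = cmod \<zeta>" using s0 by simp
    finally show ?thesis .
  qed
  have f: "fst (LL c w (\<xi>, \<zeta>)) = \<xi> + Im (w * cnj \<zeta> * cis (- c)) / s"
    by (simp add: LL_def s_def)
  have "\<xi> * (a - 1) / a = \<xi> - \<xi> / a" using a1 by (simp add: field_simps)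
  then show "fst (LL c w (\<xi>, \<zeta>)) \<ge> \<xi> * (sqrt (1 + \<eta>) - 1) / sqrt (1 + \<eta>)"
    using f t za' unfolding a_def[symmetric] by linarith
  have n1: "norm (fst (LL c w (\<xi>, \<zeta>))) \<le> 2 * \<xi>"
    unfolding f real_norm_def using t zx xp by linarith
  have n2: "norm (snd (LL c w (\<xi>, \<zeta>))) \<le> (1 + cmod w) * \<xi> + cmod w * \<xi>"
  proof -
    have "snd (LL c w (\<xi>, \<zeta>)) = \<zeta> * complex_of_real s * cis c - \<i> * w * complex_of_real \<xi>"
      by (simp add: LL_def s_def)
    then have "norm (snd (LL c w (\<xi>, \<zeta>))) \<le> cmod \<zeta> * s + cmod w * \<xi>"
      using norm_triangle_ineq4[of "\<zeta> * complex_of_real s * cis c" "\<i> * w * complex_of_real \<xi>"] s0 xp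
      by (simp add: norm_mult)
    also have "\<dots> \<le> \<xi> * (1 + cmod w) + cmod w * \<xi>"
      using zx s1 s0 x0 by (intro add_right_mono mult_mono) auto
    finally show ?thesis by (simp add: mult.commute)
  qed
  have "norm (LL c w (\<xi>, \<zeta>)) \<le> norm (fst (LL c w (\<xi>, \<zeta>))) + norm (snd (LL c w (\<xi>, \<zeta>)))"
    using norm_Pair_le[of "fst (LL c w (\<xi>, \<zeta>))" "snd (LL c w (\<xi>, \<zeta>))"] by simp
  also have "\<dots> \<le> \<xi> * (3 + 2 * cmod w)" using n1 n2 by (simp add: algebra_simps)
  finally show "norm (LL c w (\<xi>, \<zeta>)) \<le> \<xi> * (3 + 2 * cmod w)" .
qed

theorem mainTheorem9:
  fixes \<eta> :: real
  assumes "\<eta> > 0"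
  shows "(\<forall>c w v. v \<in> Lstar (c, w) ` Cplus \<eta> \<and> v \<noteq> 0 \<longrightarrow> tau (c, w) v > 0)
       \<and> (\<exists>A > 0. \<exists>B > 0. \<forall>c w v. v \<in> Lstar (c, w) ` Cplus \<eta> \<and> v \<noteq> 0 \<longrightarrow>
             norm v / tau (c, w) v \<le> A + B * cmod w)"
proof -
  define a where "a = sqrt (1 + \<eta>)"
  have a1: "a > 1" using assms by (simp add: a_def)
  define k where "k = (a - 1) / a"
  have k0: "k > 0" using a1 by (simp add: k_def)
  have main: "tau (c, w) v > 0 \<and> norm v / tau (c, w) v \<le> 3 / k + 2 / k * cmod w"
    if vin: "v \<in> Lstar (c, w) ` Cplus \<eta>" and vnz: "v \<noteq> 0" for c w v
  proof -
    obtain \<xi> \<zeta> where u: "(\<xi>, \<zeta>) \<in> Cplus \<eta>" and v: "v = LL c w (\<xi>, \<zeta>)"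
    proof -
      from vin obtain u where "u \<in> Cplus \<eta>" "v = LL c w u" unfolding Lstar_eq by blast
      then show ?thesis using that by (cases u) auto
    qed
    have nz: "LL c w (\<xi>, \<zeta>) \<noteq> 0" using vnz v by simp
    have t1: "tau (c, w) v \<ge> \<xi> * k" using key(1)[OF assms u nz] v
      by (simp add: tau_def k_def a_def)
    have xp: "\<xi> > 0" by (rule key(2)[OF assms u nz])
    have n: "norm v \<le> \<xi> * (3 + 2 * cmod w)" using key(3)[OF assms u nz] v by simp
    have tp: "tau (c, w) v > 0" using t1 xp k0 by (smt (verit) mult_pos_pos)
    have "norm v / tau (c, w) v \<le> \<xi> * (3 + 2 * cmod w) / (\<xi> * k)"
      using n t1 tp xp k0 by (intro frac_le) auto
    also have "\<dots> = 3 / k + 2 / k * cmod w" using xp k0 by (simp add: field_simps)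
    finally show ?thesis using tp by simp
  qed
  show ?thesis
  proof
    show "\<forall>c w v. v \<in> Lstar (c, w) ` Cplus \<eta> \<and> v \<noteq> 0 \<longrightarrow> tau (c, w) v > 0"
      using main by blast
    show "\<exists>A > 0. \<exists>B > 0. \<forall>c w v. v \<in> Lstar (c, w) ` Cplus \<eta> \<and> v \<noteq> 0 \<longrightarrow>
             norm v / tau (c, w) v \<le> A + B * cmod w"
      using main k0 by (intro exI[of _ "3 / k"] conjI exI[of _ "2 / k"]) auto
  qed
qed

end
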